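(* Let $\kappa$ be an uncountable regular cardinal, let $\mathcal{I}$ be a $\kappa$-complete proper ideal on $\kappa$ containing every bounded subset of $\kappa$, and suppose $\mathcal{I}$ contains an unbounded subset of $\kappa$. Let $\nu\in\{2,\kappa\}$. Then for every $1\le\alpha<\kappa^+$, neither $\boldsymbol{\Sigma}^0_\alpha({}^{\kappa}\nu,\tau_{\mathcal{I}})$ nor $\boldsymbol{\Pi}^0_\alpha({}^{\kappa}\nu,\tau_{\mathcal{I}})$ has a ${}^{\kappa}2$-universal set.
   Context: ${}^{\kappa}\nu$ is the set of functions $\kappa\to\nu$; $\tau_{\mathcal{I}}$ is the topology generated by the sets $\mathbf{N}_f=\{x:f\subseteq x\}$ for $f\colon D\to\nu$ with $D\in\mathcal{I}$. For a topological space $X$: $\boldsymbol{\Sigma}^0_1(X)$ = open sets, $\boldsymbol{\Pi}^0_1(X)$ = closed sets; for $\alpha>1$, $\boldsymbol{\Sigma}^0_\alpha(X)$ consists of unions $\bigcup_{\gamma<\kappa}A_\gamma$ with $A_\gamma\in\bigcup_{1\le\beta<\alpha}\boldsymbol{\Pi}^0_\beta(X)$, and $\boldsymbol{\Pi}^0_\alpha(X)$ the complements of $\boldsymbol{\Sigma}^0_\alpha(X)$ sets. For a class $\boldsymbol{\Gamma}$ and spaces $Y,X$, a set $\mathcal{U}\subseteq Y\times X$ is $Y$-universal for $\boldsymbol{\Gamma}(X)$ if $\mathcal{U}\in\boldsymbol{\Gamma}(Y\times X)$ and $\boldsymbol{\Gamma}(X)=\{\mathcal{U}_y: y\in Y\}$,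 where $\mathcal{U}_y=\{x:(y,x)\in\mathcal{U}\}$. Here $Y={}^{\kappa}2$ and $X=({}^{\kappa}\nu,\tau_{\mathcal{I}})$ (the conclusion holds whatever topology is placed on $Y\times X$). *)

theory Defs
  imports "HOL-Analysis.Analysis"
begin

text \<open>The cardinal kappa is represented by a type 'k with class wellorder whose order type
  is kappa; ordinals below kappa are the elements of 'k.\<close>

definition is_cardinal_type :: "'k::wellorder itself \<Rightarrow> bool" where
  "is_cardinal_type _ \<longleftrightarrow>
     (\<forall>x::'k. (card_of {y. y < x}, card_of (UNIV::'k set)) \<in> ordLess)"

definition regular_type :: "'k::wellorder itself \<Rightarrow> bool" where
  "regular_type _ \<longleftrightarrow>
     (\<forall>A::'k set. (card_of A, card_of (UNIV::'k set)) \<in> ordLess \<longrightarrow> (\<exists>b. \<forall>a\<in>A. a < b))"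

definition bounded_set :: "'k::wellorder set \<Rightarrow> bool" where
  "bounded_set A \<longleftrightarrow> (\<exists>b. \<forall>a\<in>A. a < b)"

definition kappa_complete_proper_ideal :: "'k::wellorder set set \<Rightarrow> bool" where
  "kappa_complete_proper_ideal I \<longleftrightarrow>
     {} \<in> I \<and>
     (\<forall>A B. A \<in> I \<and> B \<subseteq> A \<longrightarrow> B \<in> I) \<and>
     (\<forall>A B. A \<in> I \<and> B \<in> I \<longrightarrow> A \<union> B \<in> I) \<and>
     (\<forall>S. S \<subseteq> I \<and> (card_of S, card_of (UNIV::'k set)) \<in> ordLess \<longrightarrow> \<Union>S \<in> I) \<and>
     UNIV \<notin> I"

text \<open>The topology tau_I on functions kappa \<Rightarrow> nu, generated by the sets N_f,
  f a function D \<rightarrow> nu with D \<in> I (f represented by any total extension).\<close>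
definition tauI :: "'k set set \<Rightarrow> ('k \<Rightarrow> 'v) topology" where
  "tauI I = topology_generated_by {{x. \<forall>d\<in>D. x d = f d} | D f. D \<in> I}"

text \<open>An ordinal alpha with 1 \<le> alpha < kappa^+ is represented by a
  well-order w on a nonempty subset of 'k (of order type alpha); ordinals beta < alpha
  correspond to the initial segments of w.  Level 1 (singleton field) = open sets; for
  alpha > 1 the Sigma sets are unions of kappa-many (indexed by 'k) sets, each in
  Pi_beta for some 1 \<le> beta < alpha.\<close>
inductive borel_sigma :: "'a topology \<Rightarrow> 'k rel \<Rightarrow> 'a set \<Rightarrow> bool" for X where
  level_one: "Well_order w \<Longrightarrow> (\<exists>a. Field w = {a}) \<Longrightarrow> openin X A \<Longrightarrow> borel_sigma X w A"
| union: "Well_order w \<Longrightarrow>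
    (\<forall>i::'k. F i \<subseteq> topspace X \<and>
        (\<exists>a\<in>Field w. underS w a \<noteq> {} \<and>
            borel_sigma X (Restr w (underS w a)) (topspace X - F i))) \<Longrightarrow>
    A = (\<Union>i. F i) \<Longrightarrow> borel_sigma X w A"

definition borel_pi :: "'a topology \<Rightarrow> 'k rel \<Rightarrow> 'a set \<Rightarrow> bool" where
  "borel_pi X w A \<longleftrightarrow> A \<subseteq> topspace X \<and> borel_sigma X w (topspace X - A)"

definition is_universal :: "(('y \<times> 'x) set \<Rightarrow> bool) \<Rightarrow> ('x set \<Rightarrow> bool) \<Rightarrow> ('y \<times> 'x) set \<Rightarrow> bool" where
  "is_universal CY CX U \<longleftrightarrow> CY U \<and> Collect CX = {{x. (y, x) \<in> U} | y. True}"

end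

theory Submission
  imports Defs
begin

lemma topspace_tauI:
  assumes "kappa_complete_proper_ideal I"
  shows "topspace (tauI I) = UNIV"
proof -
  have "{} \<in> I" using assms unfolding kappa_complete_proper_ideal_def by blast
  then have "UNIV \<in> {{x. \<forall>d\<in>D. x d = f d} | D f. D \<in> I}" by force
  then show ?thesis unfolding tauI_def by auto
qed

lemma clopen_sigma:
  fixes w :: "'k rel"
  assumes "Well_order w" "Field w \<noteq> {}" "openin X A" "openin X (topspace X - A)"
  shows "borel_sigma X w A"
proof (cases "\<exists>a. Field w = {a}")
  case True
  then show ?thesis using assms by (blast intro: borel_sigma.level_one)
next
  case False
  have wo: "wo_rel w" using assms(1) by (simp add: wo_rel_def)
  define m where "m = wo_rel.minim w (Field w)"
  have m: "m \<in> Field w" unfolding m_def by (rule wo_rel.minim_in[OF wo]) (use assms(2) in auto)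
  have mle: "\<And>b. b \<in> Field w \<Longrightarrow> (m, b) \<in> w" unfolding m_def by (rule wo_rel.minim_least[OF wo]) auto
  have ne: "Field w - {m} \<noteq> {}" using False m by auto
  define a where "a = wo_rel.minim w (Field w - {m})"
  have a: "a \<in> Field w - {m}" unfolding a_def by (rule wo_rel.minim_in[OF wo]) (use ne in auto)
  have ale: "\<And>b. b \<in> Field w - {m} \<Longrightarrow> (a, b) \<in> w" unfolding a_def by (rule wo_rel.minim_least[OF wo]) auto
  have ma: "(m, a) \<in> w" using mle a by simp
  have us: "underS w a = {m}"
  proof
    show "{m} \<subseteq> underS w a" using ma a by (auto simp: underS_def)
  next
    show "underS w a \<subseteq> {m}"
    proof
      fix b assume b: "b \<in> underS w a"
      then have "(b, a) \<in> w" "b \<noteq> a" by (auto simp: underS_def)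
      moreover have "b \<in> Field w" using \<open>(b, a) \<in> w\<close> by (auto simp: Field_def)
      ultimately show "b \<in> {m}"
      proof -
        assume h1: "(b, a) \<in> w" "b \<noteq> a" "b \<in> Field w"
        show "b \<in> {m}"
        proof (rule ccontr)
          assume "b \<notin> {m}"
          then have "(a, b) \<in> w" using ale h1 by simp
          then show False using h1 wo_rel.ANTISYM[OF wo] unfolding antisym_def by blast
        qed
      qed
    qed
  qed
  have refl: "(m, m) \<in> w" using m wo_rel.REFL[OF wo] unfolding refl_on_def by blast
  have F: "Field (Restr w {m}) = {m}" using refl by (auto simp: Field_def)
  have lvl: "borel_sigma X (Restr w (underS w a)) (topspace X - A)"
    unfolding us
  proof (rule borel_sigma.level_one)
    show "Well_order (Restr w {m})" by (rule Well_order_Restr[OF assms(1)])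
    show "\<exists>a. Field (Restr w {m}) = {a}" using F by blast
  qed (rule assms(4))
  have sub: "A \<subseteq> topspace X" using assms(3) openin_subset by blast
  have "topspace X - (topspace X - A) = A" using sub by blast
  have aF: "a \<in> Field w" using a by simp
  have usn: "underS w a \<noteq> {}" using us by simp
  show ?thesis
  proof (rule borel_sigma.union[where F = "\<lambda>_. A"])
    show "Well_order w" by (rule assms(1))
    show "\<forall>i::'k. A \<subseteq> topspace X \<and> (\<exists>a\<in>Field w. underS w a \<noteq> {} \<and>
            borel_sigma X (Restr w (underS w a)) (topspace X - A))"
      using sub aF usn lvl by blast
    show "A = (\<Union>i::'k. A)" by simp
  qed
qed

lemma no_inj_pow: "\<not> inj (g :: 'a set \<Rightarrow> 'a)"
proof
  assume "inj g"
  then have "range (inv g) = Pow (UNIV :: 'a set)"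
    by (metis Pow_UNIV inv_f_f surj_def)
  then show False using Cantors_theorem by blast
qed

lemma family:
  fixes I :: "'k::wellorder set set" and a1 :: 'v and h :: "'k \<Rightarrow> 'k"
  assumes "kappa_complete_proper_ideal I" "a0 \<noteq> a1" "range h \<in> I" "inj h"
  defines "Fam \<equiv> \<lambda>S. {x :: 'k \<Rightarrow> 'v. (\<lambda>i. x (h i) = a1) \<in> S}"
  shows "openin (tauI I) (Fam S)" and "topspace (tauI I) - Fam S = Fam (- S)" and "inj Fam"
proof -
  let ?D = "range h"
  have eq: "Fam S = \<Union>{{x'. \<forall>d\<in>?D. x' d = x d} | x. x \<in> Fam S}"
  proof
    show "Fam S \<subseteq> \<Union>{{x'. \<forall>d\<in>?D. x' d = x d} | x. x \<in> Fam S}" by blast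
  next
    show "\<Union>{{x'. \<forall>d\<in>?D. x' d = x d} | x. x \<in> Fam S} \<subseteq> Fam S"
    proof
      fix z assume "z \<in> \<Union>{{x'. \<forall>d\<in>?D. x' d = x d} | x. x \<in> Fam S}"
      then obtain x where "x \<in> Fam S" "\<forall>d\<in>?D. z d = x d" by blast
      then have "(\<lambda>i. z (h i) = a1) = (\<lambda>i. x (h i) = a1)" by auto
      then show "z \<in> Fam S" using \<open>x \<in> Fam S\<close> unfolding Fam_def by simp
    qed
  qed
  have "generate_topology_on {{x. \<forall>d\<in>D. x d = f d} | D f. D \<in> I}
          (\<Union>{{x'. \<forall>d\<in>?D. x' d = x d} | x. x \<in> Fam S})"
    apply (rule generate_topology_on.UN)
    apply (rule generate_topology_on.Basis)
    using assms(3) by blast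
  then have "generate_topology_on {{x. \<forall>d\<in>D. x d = f d} | D f. D \<in> I} (Fam S)"
    by (simp only: eq[symmetric])
  then show "openin (tauI I) (Fam S)" unfolding tauI_def
    by (simp only: openin_topology_generated_by_iff)
  show "topspace (tauI I) - Fam S = Fam (- S)"
    using topspace_tauI[OF assms(1)] unfolding Fam_def by auto
  show "inj Fam"
  proof (rule injI)
    fix S S' assume E: "Fam S = Fam S'"
    show "S = S'"
    proof (rule set_eqI)
      fix y :: "'k \<Rightarrow> bool"
      define x where "x = (\<lambda>d. if \<exists>i. d = h i \<and> y i then a1 else a0)"
      have xy: "(\<lambda>i. x (h i) = a1) = y"
      proof
        fix i
        show "(x (h i) = a1) = y i"
        proof (cases "y i")
          case True then show ?thesis unfolding x_def by auto
        next
          case False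
          have "\<not> (\<exists>j. h i = h j \<and> y j)"
            using False injD[OF assms(4)] by metis
          then show ?thesis unfolding x_def using False assms(2) by simp
        qed
      qed
      have "y \<in> S \<longleftrightarrow> x \<in> Fam S" unfolding Fam_def using xy by simp
      moreover have "y \<in> S' \<longleftrightarrow> x \<in> Fam S'" unfolding Fam_def using xy by simp
      ultimately show "y \<in> S \<longleftrightarrow> y \<in> S'" using E by simp
    qed
  qed
qed

lemma no_universal:
  fixes I :: "'k::wellorder set set" and a1 :: 'v and h :: "'k \<Rightarrow> 'k"
    and T :: "(('k \<Rightarrow> bool) \<times> ('k \<Rightarrow> 'v)) topology"
  assumes "kappa_complete_proper_ideal I" "a0 \<noteq> a1" "range h \<in> I" "inj h"
    and "Well_order w" "Field w \<noteq> {}"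
  shows "\<not> (\<exists>U. is_universal (borel_sigma T w) (borel_sigma (tauI I) w) U) \<and>
         \<not> (\<exists>U. is_universal (borel_pi T w) (borel_pi (tauI I) w) U)"
proof -
  define Fam where "Fam = (\<lambda>S. {x :: 'k \<Rightarrow> 'v. (\<lambda>i. x (h i) = a1) \<in> S})"
  have f1: "openin (tauI I) (Fam S)" for S
    unfolding Fam_def by (rule family(1)[OF assms(1-4)])
  have f2: "topspace (tauI I) - Fam S = Fam (- S)" for S
    unfolding Fam_def by (rule family(2)[OF assms(1-4)])
  have f3: "inj Fam"
    unfolding Fam_def by (rule family(3)[OF assms(1-4)])
  note fam = f1 f2 f3
  have top: "topspace (tauI I :: ('k \<Rightarrow> 'v) topology) = UNIV" using topspace_tauI[OF assms(1)] .
  have sig: "borel_sigma (tauI I) w (Fam S)" for S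
  proof -
    have "openin (tauI I) (topspace (tauI I) - Fam S)"
      using fam(1)[of "-S"] fam(2)[of S] by simp
    then show ?thesis by (rule clopen_sigma[OF assms(5,6) fam(1)])
  qed
  have pi: "borel_pi (tauI I) w (Fam S)" for S
    unfolding borel_pi_def using sig[of "-S"] fam(2)[of S] top by simp
  have gen: False if inC: "\<And>S. C (Fam S)" and U: "Collect C = {{x. (y, x) \<in> U} | y. True}"
    for C :: "('k \<Rightarrow> 'v) set \<Rightarrow> bool" and U :: "(('k \<Rightarrow> bool) \<times> ('k \<Rightarrow> 'v)) set"
  proof -
    have "\<forall>S. \<exists>y. Fam S = {x. (y, x) \<in> U}" using inC U by blast
    then obtain g where g: "\<And>S. Fam S = {x. (g S, x) \<in> U}" by metis
    have "inj g"
    proof (rule injI)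
      fix S S' assume "g S = g S'"
      then have "Fam S = Fam S'" using g by simp
      then show "S = S'" using fam(3) by (simp add: inj_def)
    qed
    then show False using no_inj_pow by blast
  qed
  show ?thesis
    unfolding is_universal_def using gen[of "borel_sigma (tauI I) w", OF sig] gen[of "borel_pi (tauI I) w", OF pi] by blast
qed

theorem proposition4p10:
  fixes I :: "'k::wellorder set set"
  assumes "is_cardinal_type TYPE('k)"
    and "\<not> countable (UNIV::'k set)"
    and "regular_type TYPE('k)"
    and "kappa_complete_proper_ideal I"
    and "\<forall>A. bounded_set A \<longrightarrow> A \<in> I"
    and "\<exists>A\<in>I. \<not> bounded_set A"
  shows "\<forall>w::'k rel. Well_order w \<and> Field w \<noteq> {} \<longrightarrow>
     (\<forall>T::(('k \<Rightarrow> bool) \<times> ('k \<Rightarrow> bool)) topology. topspace T = UNIV \<longrightarrow>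
        \<not> (\<exists>U. is_universal (borel_sigma T w) (borel_sigma (tauI I) w) U) \<and>
        \<not> (\<exists>U. is_universal (borel_pi T w) (borel_pi (tauI I) w) U)) \<and>
     (\<forall>T::(('k \<Rightarrow> bool) \<times> ('k \<Rightarrow> 'k)) topology. topspace T = UNIV \<longrightarrow>
        \<not> (\<exists>U. is_universal (borel_sigma T w) (borel_sigma (tauI I) w) U) \<and>
        \<not> (\<exists>U. is_universal (borel_pi T w) (borel_pi (tauI I) w) U))"
proof -
  obtain A where A: "A \<in> I" "\<not> bounded_set A" using assms(6) by blast
  have "\<not> (card_of A, card_of (UNIV::'k set)) \<in> ordLess"
    using A(2) assms(3) unfolding regular_type_def bounded_set_def by blast
  then have "(card_of (UNIV::'k set), card_of A) \<in> ordLeq"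
    using not_ordLess_iff_ordLeq card_of_Well_order by blast
  then have "\<exists>f::'k\<Rightarrow>'k. inj_on f UNIV \<and> f ` UNIV \<subseteq> A"
    by (simp only: card_of_ordLeq[symmetric])
  then obtain h :: "'k \<Rightarrow> 'k" where h: "inj h" "range h \<subseteq> A"
    by blast
  have down: "\<forall>A B. A \<in> I \<and> B \<subseteq> A \<longrightarrow> B \<in> I"
    using assms(4) unfolding kappa_complete_proper_ideal_def by (elim conjE)
  have hI: "range h \<in> I" using A(1) h(2) down by blast
  have inf: "infinite (UNIV::'k set)" using assms(2) countable_finite by blast
  then have "UNIV \<noteq> {undefined::'k}" by (metis finite.emptyI finite_insert)
  have "\<exists>b1::'k. undefined \<noteq> b1"
  proof (rule ccontr)
    assume "\<not> (\<exists>b1::'k. undefined \<noteq> b1)"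
    then have "UNIV = {undefined::'k}" by (metis UNIV_eq_I singletonI)
    with \<open>UNIV \<noteq> {undefined::'k}\<close> show False by simp
  qed
  then obtain b1 :: 'k where b: "undefined \<noteq> b1" by blast
  show ?thesis
  proof (intro allI impI conjI)
    fix w :: "'k rel" and T :: "(('k \<Rightarrow> bool) \<times> ('k \<Rightarrow> bool)) topology"
    assume w: "Well_order w \<and> Field w \<noteq> {}"
    note r = no_universal[OF assms(4) _ hI h(1), of False True w T]
    show "\<not> (\<exists>U. is_universal (borel_sigma T w) (borel_sigma (tauI I) w) U)"
      using r w by simp
    show "\<not> (\<exists>U. is_universal (borel_pi T w) (borel_pi (tauI I) w) U)"
      using r w by simp
  next
    fix w :: "'k rel" and T :: "(('k \<Rightarrow> bool) \<times> ('k \<Rightarrow> 'k)) topology"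
    assume w: "Well_order w \<and> Field w \<noteq> {}"
    note r = no_universal[OF assms(4) b hI h(1), of w T]
    show "\<not> (\<exists>U. is_universal (borel_sigma T w) (borel_sigma (tauI I) w) U)"
      using r w by blast
    show "\<not> (\<exists>U. is_universal (borel_pi T w) (borel_pi (tauI I) w) U)"
      using r w by blast
  qed
qed

end
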